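(* For all $n\ge1$, $|\mathcal S_n[3]|=|\mathcal S'_n[3]|=3\cdot2^{2n+1}$.
   Context: Let $\tau=(1+\sqrt5)/2$, $\tau'=(1-\sqrt5)/2$. Let $\mathbb F_4=\mathbb{Z}[\tau]/2\mathbb{Z}[\tau]$ and for $y\in\mathbb{Z}[\tau]^3$ let $\bar y\in\mathbb F_4^3$ be the coordinatewise reduction. For $n\ge1$, $\mathcal S_n[3]=\{x\in2^{-n}\mathbb{Z}[\tau]^3: x\cdot x=1,\ \overline{2^nx}\in\{(\bar1,\bar{\tau'},\bar\tau),(\bar{\tau'},\bar\tau,\bar1),(\bar\tau,\bar1,\bar{\tau'})\}\}$ and $\mathcal S'_n[3]$ is defined in the same way with $\bar\tau$ and $\bar{\tau'}$ interchanged. *)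

theory Defs
  imports Complex_Main
begin

definition tau :: real where "tau = (1 + sqrt 5) / 2"
definition tau' :: real where "tau' = (1 - sqrt 5) / 2"

definition ZT :: "real set" where
  "ZT = {of_int a + of_int b * tau | a b. True}"

text \<open>Equality of reductions in F_4 = Z[tau]/2Z[tau]: for u, v in Z[tau],
  the reductions agree iff u - v lies in 2 Z[tau].\<close>
definition red_eq :: "real \<Rightarrow> real \<Rightarrow> bool" where
  "red_eq u v \<longleftrightarrow> u \<in> ZT \<and> v \<in> ZT \<and> (\<exists>w\<in>ZT. u - v = 2 * w)"

definition red3_eq :: "real \<times> real \<times> real \<Rightarrow> real \<times> real \<times> real \<Rightarrow> bool" where
  "red3_eq y c \<longleftrightarrow> (case y of (y1, y2, y3) \<Rightarrow> case c of (c1, c2, c3) \<Rightarrow>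
      red_eq y1 c1 \<and> red_eq y2 c2 \<and> red_eq y3 c3)"

definition dot3 :: "real \<times> real \<times> real \<Rightarrow> real \<times> real \<times> real \<Rightarrow> real" where
  "dot3 x y = (case x of (x1, x2, x3) \<Rightarrow> case y of (y1, y2, y3) \<Rightarrow>
      x1 * y1 + x2 * y2 + x3 * y3)"

definition scale3 :: "real \<Rightarrow> real \<times> real \<times> real \<Rightarrow> real \<times> real \<times> real" where
  "scale3 c x = (case x of (x1, x2, x3) \<Rightarrow> (c * x1, c * x2, c * x3))"

definition in_lattice :: "nat \<Rightarrow> real \<times> real \<times> real \<Rightarrow> bool" where
  "in_lattice n x \<longleftrightarrow> (case scale3 (2 ^ n) x of (y1, y2, y3) \<Rightarrow>
      y1 \<in> ZT \<and> y2 \<in> ZT \<and> y3 \<in> ZT)"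

definition S3 :: "nat \<Rightarrow> (real \<times> real \<times> real) set" where
  "S3 n = {x. in_lattice n x \<and> dot3 x x = 1 \<and>
     (red3_eq (scale3 (2 ^ n) x) (1, tau', tau) \<or>
      red3_eq (scale3 (2 ^ n) x) (tau', tau, 1) \<or>
      red3_eq (scale3 (2 ^ n) x) (tau, 1, tau'))}"

definition S3' :: "nat \<Rightarrow> (real \<times> real \<times> real) set" where
  "S3' n = {x. in_lattice n x \<and> dot3 x x = 1 \<and>
     (red3_eq (scale3 (2 ^ n) x) (1, tau, tau') \<or>
      red3_eq (scale3 (2 ^ n) x) (tau, tau', 1) \<or>
      red3_eq (scale3 (2 ^ n) x) (tau', 1, tau))}"

end

theory Submission
  imports Defs
begin


lemma tau_sq: "tau * tau = tau + 1"
proof -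
  have "sqrt 5 * sqrt 5 = (5::real)" by simp
  thus ?thesis unfolding tau_def by (simp add: field_simps algebra_simps)
qed

lemma tau'_eq: "tau' = 1 - tau"
  unfolding tau_def tau'_def by (simp add: field_simps)

lemma descent: "(a::int)*a + a*b - b*b = 0 \<Longrightarrow> a = 0 \<and> b = 0"
proof (induction "nat (\<bar>a\<bar> + \<bar>b\<bar>)" arbitrary: a b rule: less_induct)
  case less
  show ?case
  proof (cases "a = 0 \<and> b = 0")
    case True then show ?thesis by simp
  next
    case False
    have ea: "even a" and eb: "even b"
    proof -
      have "even (a*a + a*b - b*b)" using less.prems by simp
      then show "even a" "even b" by (auto simp: even_mult_iff)
    qed
    obtain a' b' where ab: "a = 2*a'" "b = 2*b'" using ea eb by (auto elim!: evenE)
    have "a'*a' + a'*b' - b'*b' = 0" using less.prems ab by (simp add: algebra_simps)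
    moreover have "nat (\<bar>a'\<bar> + \<bar>b'\<bar>) < nat (\<bar>a\<bar> + \<bar>b\<bar>)" using ab False by auto
    ultimately have "a' = 0 \<and> b' = 0" using less.hyps by blast
    then show ?thesis using ab by simp
  qed
qed

definition ev :: "int \<Rightarrow> int \<Rightarrow> real" where "ev a b = of_int a + of_int b * tau"

lemma ev_zero: "ev a b = 0 \<Longrightarrow> a = 0 \<and> b = 0"
proof -
  assume h: "ev a b = 0"
  hence ha: "of_int a = - (of_int b * tau)" unfolding ev_def by (simp add: eq_neg_iff_add_eq_0)
  have "(of_int (a*a + a*b - b*b)::real) = of_int b * of_int b * (tau*tau - tau - 1)"
    using ha by (simp add: algebra_simps)
  also have "\<dots> = 0" by (simp add: tau_sq)
  finally have "a*a + a*b - b*b = 0" by (simp only: of_int_eq_0_iff)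
  thus ?thesis by (rule descent)
qed

lemma ev_inj: "ev a b = ev c d \<longleftrightarrow> a = c \<and> b = d"
proof
  assume "ev a b = ev c d"
  hence "ev (a - c) (b - d) = 0" unfolding ev_def by (simp add: algebra_simps)
  thus "a = c \<and> b = d" using ev_zero by fastforce
qed simp

lemma ZT_ev: "u \<in> ZT \<longleftrightarrow> (\<exists>a b. u = ev a b)"
  unfolding ZT_def ev_def by auto

lemma red_eq_ev: "red_eq (ev a b) (ev c d) \<longleftrightarrow> even (a - c) \<and> even (b - d)"
proof
  assume "red_eq (ev a b) (ev c d)"
  then obtain w where w: "w \<in> ZT" "ev a b - ev c d = 2 * w" unfolding red_eq_def by auto
  then obtain e f where "w = ev e f" unfolding ZT_ev by auto
  with w have "ev a b - ev c d = 2 * ev e f" by simp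
  moreover have "ev a b - ev c d = ev (a - c) (b - d)" "2 * ev e f = ev (2*e) (2*f)"
    unfolding ev_def by (simp_all add: algebra_simps)
  ultimately have "ev (a - c) (b - d) = ev (2*e) (2*f)" by simp
  hence "a - c = 2*e" "b - d = 2*f" unfolding ev_inj by auto
  thus "even (a - c) \<and> even (b - d)" by simp
next
  assume "even (a - c) \<and> even (b - d)"
  then obtain e f where ef: "a - c = 2*e" "b - d = 2*f" by (meson dvdE)
  have "ev a b - ev c d = ev (a - c) (b - d)" "2 * ev e f = ev (2*e) (2*f)"
    unfolding ev_def by (simp_all add: algebra_simps)
  hence "ev a b - ev c d = 2 * ev e f" using ef by simp
  moreover have "ev a b \<in> ZT" "ev c d \<in> ZT" "ev e f \<in> ZT" unfolding ZT_ev by auto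
  ultimately show "red_eq (ev a b) (ev c d)" unfolding red_eq_def by blast
qed

lemma ev_mul: "ev a b * ev c d = ev (a*c + b*d) (a*d + b*c + b*d)"
proof -
  have "ev a b * ev c d = of_int a * of_int c + (of_int a * of_int d + of_int b * of_int c) * tau + of_int b * of_int d * (tau*tau)"
    unfolding ev_def by (simp add: algebra_simps)
  also have "\<dots> = ev (a*c + b*d) (a*d + b*c + b*d)" unfolding ev_def tau_sq by (simp add: algebra_simps)
  finally show ?thesis .
qed

lemma one_ev: "1 = ev 1 0" and tau_ev: "tau = ev 0 1" and tau'_ev: "tau' = ev 1 (-1)"
  unfolding ev_def tau'_eq by simp_all




type_synonym v6 = "int \<times> int \<times> int \<times> int \<times> int \<times> int"

definition ev3 :: "v6 \<Rightarrow> real \<times> real \<times> real" where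
  "ev3 z = (case z of (a1,b1,a2,b2,a3,b3) \<Rightarrow> (ev a1 b1, ev a2 b2, ev a3 b3))"

definition N1 :: "v6 \<Rightarrow> int" where
  "N1 z = (case z of (a1,b1,a2,b2,a3,b3) \<Rightarrow> a1*a1+b1*b1+a2*a2+b2*b2+a3*a3+b3*b3)"
definition N2 :: "v6 \<Rightarrow> int" where
  "N2 z = (case z of (a1,b1,a2,b2,a3,b3) \<Rightarrow> 2*a1*b1+b1*b1+2*a2*b2+b2*b2+2*a3*b3+b3*b3)"

definition patP :: "v6 \<Rightarrow> bool" where
  "patP z = (case z of (a1,b1,a2,b2,a3,b3) \<Rightarrow>
     (odd a1 \<and> even b1 \<and> odd a2 \<and> odd b2 \<and> even a3 \<and> odd b3) \<or>
     (odd a1 \<and> odd b1 \<and> even a2 \<and> odd b2 \<and> odd a3 \<and> even b3) \<or>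
     (even a1 \<and> odd b1 \<and> odd a2 \<and> even b2 \<and> odd a3 \<and> odd b3))"
definition patQ :: "v6 \<Rightarrow> bool" where
  "patQ z = (case z of (a1,b1,a2,b2,a3,b3) \<Rightarrow>
     (odd a1 \<and> even b1 \<and> even a2 \<and> odd b2 \<and> odd a3 \<and> odd b3) \<or>
     (even a1 \<and> odd b1 \<and> odd a2 \<and> odd b2 \<and> odd a3 \<and> even b3) \<or>
     (odd a1 \<and> odd b1 \<and> odd a2 \<and> even b2 \<and> even a3 \<and> odd b3))"

definition A :: "nat \<Rightarrow> v6 set" where
  "A n = {z. N1 z = 4^n \<and> N2 z = 0 \<and> patP z}"
definition A' :: "nat \<Rightarrow> v6 set" where
  "A' n = {z. N1 z = 4^n \<and> N2 z = 0 \<and> patQ z}"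

lemma ev_add: "ev a b + ev c d = ev (a+c) (b+d)"
  by (simp add: ev_def algebra_simps)

lemma dot3_ev3: "dot3 (ev3 z) (ev3 z) = ev (N1 z) (N2 z)"
  by (cases z) (simp add: dot3_def ev3_def N1_def N2_def ev_mul ev_add ev_inj algebra_simps)

lemma dot3_scale: "dot3 (scale3 c x) (scale3 c x) = c*c * dot3 x x"
  by (cases x) (simp add: dot3_def scale3_def algebra_simps)

lemma scale3_scale3: "scale3 c (scale3 d x) = scale3 (c*d) x"
  by (cases x) (simp add: scale3_def)

lemma scale3_1: "scale3 1 x = x"
  by (cases x) (simp add: scale3_def)

lemma ev3_inj: "ev3 z = ev3 w \<longleftrightarrow> z = w"
  by (cases z; cases w) (auto simp: ev3_def ev_inj)

lemma red3_P: "(red3_eq (ev3 z) (1, tau', tau) \<or> red3_eq (ev3 z) (tau', tau, 1) \<or>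
     red3_eq (ev3 z) (tau, 1, tau')) \<longleftrightarrow> patP z"
  by (cases z) (simp add: red3_eq_def ev3_def one_ev tau_ev tau'_ev red_eq_ev patP_def)

lemma red3_Q: "(red3_eq (ev3 z) (1, tau, tau') \<or> red3_eq (ev3 z) (tau, tau', 1) \<or>
     red3_eq (ev3 z) (tau', 1, tau)) \<longleftrightarrow> patQ z"
  by (cases z) (simp add: red3_eq_def ev3_def one_ev tau_ev tau'_ev red_eq_ev patQ_def)

lemma lattice_ev3: "in_lattice n x \<longleftrightarrow> (\<exists>z. scale3 (2^n) x = ev3 z)"
proof -
  obtain x1 x2 x3 where x: "x = (x1,x2,x3)" by (cases x)
  show ?thesis
  proof
    assume "in_lattice n x"
    then obtain a1 b1 a2 b2 a3 b3 where "2^n*x1 = ev a1 b1" "2^n*x2 = ev a2 b2" "2^n*x3 = ev a3 b3"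
      unfolding in_lattice_def x scale3_def ZT_ev by auto
    thus "\<exists>z. scale3 (2^n) x = ev3 z"
      by (intro exI[of _ "(a1,b1,a2,b2,a3,b3)"]) (simp add: x scale3_def ev3_def)
  next
    assume "\<exists>z. scale3 (2^n) x = ev3 z"
    then obtain z where "scale3 (2^n) x = ev3 z" by blast
    thus "in_lattice n x" unfolding in_lattice_def
      by (cases z) (auto simp: ev3_def ZT_ev)
  qed
qed

lemma ev_pow4: "(4::real)^n = ev (4^n) 0"
  by (simp add: ev_def)

lemma S_image_gen:
  assumes "\<And>z. R (ev3 z) \<longleftrightarrow> pat z"
  shows "{x. in_lattice n x \<and> dot3 x x = 1 \<and> R (scale3 (2^n) x)} =
         (\<lambda>z. scale3 (1/2^n) (ev3 z)) ` {z. N1 z = 4^n \<and> N2 z = 0 \<and> pat z}"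
proof (intro set_eqI iffI)
  fix x assume "x \<in> {x. in_lattice n x \<and> dot3 x x = 1 \<and> R (scale3 (2^n) x)}"
  hence h: "in_lattice n x" "dot3 x x = 1" "R (scale3 (2^n) x)" by auto
  then obtain z where z: "scale3 (2^n) x = ev3 z" unfolding lattice_ev3 by blast
  have "x = scale3 (1/2^n) (ev3 z)" unfolding z[symmetric] scale3_scale3 by (simp add: scale3_1)
  moreover have "ev (N1 z) (N2 z) = ev (4^n) 0"
    unfolding dot3_ev3[symmetric] z[symmetric] dot3_scale h(2) ev_pow4[symmetric]
    by (simp add: power_mult_distrib[symmetric])
  moreover have "pat z" using h(3) z assms by simp
  ultimately show "x \<in> (\<lambda>z. scale3 (1/2^n) (ev3 z)) ` {z. N1 z = 4^n \<and> N2 z = 0 \<and> pat z}"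
    unfolding ev_inj by auto
next
  fix x assume "x \<in> (\<lambda>z. scale3 (1/2^n) (ev3 z)) ` {z. N1 z = 4^n \<and> N2 z = 0 \<and> pat z}"
  then obtain z where z: "x = scale3 (1/2^n) (ev3 z)" "N1 z = 4^n" "N2 z = 0" "pat z" by auto
  have s: "scale3 (2^n) x = ev3 z" unfolding z(1) scale3_scale3 by (simp add: scale3_1)
  have "dot3 x x = (1/2^n)*(1/2^n) * ev (4^n) 0"
    unfolding z(1) dot3_scale dot3_ev3 z(2,3) by simp
  also have "\<dots> = 1"
  proof -
    have "ev (4^n) 0 = (2^n)*(2^n :: real)" by (simp add: ev_def power_mult_distrib[symmetric])
    thus ?thesis by simp
  qed
  finally have "dot3 x x = 1" .
  moreover have "in_lattice n x" unfolding lattice_ev3 using s by blast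
  moreover have "R (scale3 (2^n) x)" using s z(4) assms by simp
  ultimately show "x \<in> {x. in_lattice n x \<and> dot3 x x = 1 \<and> R (scale3 (2^n) x)}"
    by simp
qed

lemma inj_emb: "inj (\<lambda>z. scale3 (1/2^n) (ev3 z))"
proof
  fix z w assume "scale3 (1/2^n) (ev3 z) = scale3 (1/2^n) (ev3 w)"
  hence "scale3 (2^n) (scale3 (1/2^n) (ev3 z)) = scale3 (2^n) (scale3 (1/2^n) (ev3 w))" by simp
  thus "z = w" unfolding scale3_scale3 by (simp add: scale3_1 ev3_inj)
qed

lemma card_S3: "card (S3 n) = card (A n)"
proof -
  have "S3 n = (\<lambda>z. scale3 (1/2^n) (ev3 z)) ` A n"
    unfolding S3_def A_def by (rule S_image_gen) (rule red3_P)
  thus ?thesis using card_image[OF inj_on_subset[OF inj_emb subset_UNIV]] by simp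
qed

lemma card_S3': "card (S3' n) = card (A' n)"
proof -
  have "S3' n = (\<lambda>z. scale3 (1/2^n) (ev3 z)) ` A' n"
    unfolding S3'_def A'_def by (rule S_image_gen) (rule red3_Q)
  thus ?thesis using card_image[OF inj_on_subset[OF inj_emb subset_UNIV]] by simp
qed




definition dv4 :: "v6 \<Rightarrow> bool" where
  "dv4 z = (case z of (a1,b1,a2,b2,a3,b3) \<Rightarrow> 4 dvd a1 \<and> 4 dvd b1 \<and> 4 dvd a2 \<and> 4 dvd b2 \<and> 4 dvd a3 \<and> 4 dvd b3)"

lemma dvd_mult_cancel_left_4: "(8::int) dvd 4*x \<longleftrightarrow> even x"
proof -
  have "(8::int) dvd 4*x \<longleftrightarrow> (4*2) dvd 4*x" by simp
  also have "\<dots> \<longleftrightarrow> 2 dvd x" by (rule dvd_times_left_cancel_iff) simp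
  finally show ?thesis .
qed
  
lemma dvd_mult_cancel_left_4b: "(4::int) dvd 2*x \<longleftrightarrow> even x"
proof -
  have "(4::int) dvd 2*x \<longleftrightarrow> (2*2) dvd 2*x" by simp
  also have "\<dots> \<longleftrightarrow> 2 dvd x" by (rule dvd_times_left_cancel_iff) simp
  finally show ?thesis .
qed

lemma all4: "(\<forall>k<(4::nat). P k) = (P 0 \<and> P 1 \<and> P 2 \<and> P 3)"
proof
  assume "P 0 \<and> P 1 \<and> P 2 \<and> P 3"
  thus "\<forall>k<4. P k" by (auto simp: less_Suc_eq numeral_eq_Suc)
qed auto

definition M :: "nat \<Rightarrow> v6 \<Rightarrow> v6" where
  "M k z = (case z of (a1,b1,a2,b2,a3,b3) \<Rightarrow>
    if k = 0 then ((-a1 - a3 - b2 + b3), (-a2 + a3 - b1 - b2), (-a1 - a2 + b1 - b3), (a1 - a3 - b2 - b3), (a2 + a3 + b1 - b2), (a1 - a2 + b1 + b3)) else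
    if k = 1 then ((-a1 - a3 - b2 + b3), (-a2 + a3 - b1 - b2), (a1 + a2 - b1 + b3), (-a1 + a3 + b2 + b3), (-a2 - a3 - b1 + b2), (-a1 + a2 - b1 - b3)) else
    if k = 2 then ((-a1 + a3 - b2 - b3), (-a2 - a3 - b1 - b2), (-a1 - a2 + b1 + b3), (a1 + a3 - b2 + b3), (-a2 + a3 - b1 + b2), (-a1 + a2 - b1 + b3)) else
    ((-a1 + a3 - b2 - b3), (-a2 - a3 - b1 - b2), (a1 + a2 - b1 - b3), (-a1 - a3 + b2 - b3), (a2 - a3 + b1 - b2), (a1 - a2 + b1 - b3)))"

definition MT :: "nat \<Rightarrow> v6 \<Rightarrow> v6" where
  "MT k z = (case z of (a1,b1,a2,b2,a3,b3) \<Rightarrow>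
    if k = 0 then ((-a1 - a2 + b2 + b3), (a2 + a3 - b1 + b3), (-a2 + a3 - b1 - b3), (-a1 - a3 - b1 - b2), (-a1 + a3 + b1 - b2), (a1 - a2 - b2 + b3)) else
    if k = 1 then ((-a1 + a2 - b2 - b3), (-a2 - a3 - b1 - b3), (a2 - a3 - b1 + b3), (-a1 + a3 - b1 + b2), (-a1 - a3 + b1 + b2), (a1 + a2 + b2 - b3)) else
    if k = 2 then ((-a1 - a2 + b2 - b3), (a2 - a3 - b1 - b3), (-a2 - a3 - b1 + b3), (-a1 + a3 - b1 - b2), (a1 + a3 - b1 + b2), (-a1 + a2 + b2 + b3)) else
    ((-a1 + a2 - b2 + b3), (-a2 + a3 - b1 + b3), (a2 + a3 - b1 - b3), (-a1 - a3 - b1 + b2), (a1 - a3 - b1 - b2), (-a1 - a2 - b2 - b3)))"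

lemma F1_1:
  fixes w1 w2 w3 w4 w5 w6 :: int
  assumes y: "y = ((1 + 2*w1), (2*w2), (1 + 2*w3), (1 + 2*w4), (2*w5), (1 + 2*w6))" and h1: "8 dvd N1 y" and h2: "8 dvd N2 y"
  shows "(dv4 (MT 0 y) \<or> dv4 (MT 1 y) \<or> dv4 (MT 2 y) \<or> dv4 (MT 3 y)) \<and> (\<forall>k<4. \<forall>j<4. dv4 (MT k y) \<longrightarrow> dv4 (MT j y) \<longrightarrow> k = j)"
proof -
  have r1: "N1 y = 4 * (1 + w1 + w3 + w4 + w6 + w1*w1 + w2*w2 + w3*w3 + w4*w4 + w5*w5 + w6*w6)" unfolding y N1_def by (simp add: algebra_simps)
  have e1: "even (1 + w1 + w3 + w4 + w6 + w1*w1 + w2*w2 + w3*w3 + w4*w4 + w5*w5 + w6*w6)" using h1 unfolding r1 dvd_mult_cancel_left_4 .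
  have r2: "N2 y = 4 * (1 + w2 + w3 + 2*w4 + w5 + w6 + 2*w1*w2 + w2*w2 + 2*w3*w4 + w4*w4 + 2*w5*w6 + w6*w6)" unfolding y N2_def by (simp add: algebra_simps)
  have e2: "even (1 + w2 + w3 + 2*w4 + w5 + w6 + 2*w1*w2 + w2*w2 + 2*w3*w4 + w4*w4 + 2*w5*w6 + w6*w6)" using h2 unfolding r2 dvd_mult_cancel_left_4 .
  have m0: "dv4 (MT 0 y) \<longleftrightarrow> even (-w1 - w3 + w4 + w6) \<and> even (1 - w2 + w3 + w5 + w6) \<and> even (-1 - w2 - w3 + w5 - w6) \<and> even (-1 - w1 - w2 - w4 - w5) \<and> even (-1 - w1 + w2 - w4 + w5) \<and> even (w1 - w3 - w4 + w6)"
  proof -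
    have "MT 0 y = (2 * (-w1 - w3 + w4 + w6), 2 * (1 - w2 + w3 + w5 + w6), 2 * (-1 - w2 - w3 + w5 - w6), 2 * (-1 - w1 - w2 - w4 - w5), 2 * (-1 - w1 + w2 - w4 + w5), 2 * (w1 - w3 - w4 + w6))" unfolding y MT_def by (simp add: algebra_simps)
    thus ?thesis unfolding dv4_def by (simp only: prod.case dvd_mult_cancel_left_4b)
  qed
  have m1: "dv4 (MT 1 y) \<longleftrightarrow> even (-1 - w1 + w3 - w4 - w6) \<and> even (-1 - w2 - w3 - w5 - w6) \<and> even (1 - w2 + w3 - w5 + w6) \<and> even (-w1 - w2 + w4 + w5) \<and> even (-w1 + w2 + w4 - w5) \<and> even (1 + w1 + w3 + w4 - w6)"
  proof -
    have "MT 1 y = (2 * (-1 - w1 + w3 - w4 - w6), 2 * (-1 - w2 - w3 - w5 - w6), 2 * (1 - w2 + w3 - w5 + w6), 2 * (-w1 - w2 + w4 + w5), 2 * (-w1 + w2 + w4 - w5), 2 * (1 + w1 + w3 + w4 - w6))" unfolding y MT_def by (simp add: algebra_simps)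
    thus ?thesis unfolding dv4_def by (simp only: prod.case dvd_mult_cancel_left_4b)
  qed
  have m2: "dv4 (MT 2 y) \<longleftrightarrow> even (-1 - w1 - w3 + w4 - w6) \<and> even (-w2 + w3 - w5 - w6) \<and> even (-w2 - w3 - w5 + w6) \<and> even (-1 - w1 - w2 - w4 + w5) \<and> even (1 + w1 - w2 + w4 + w5) \<and> even (1 - w1 + w3 + w4 + w6)"
  proof -
    have "MT 2 y = (2 * (-1 - w1 - w3 + w4 - w6), 2 * (-w2 + w3 - w5 - w6), 2 * (-w2 - w3 - w5 + w6), 2 * (-1 - w1 - w2 - w4 + w5), 2 * (1 + w1 - w2 + w4 + w5), 2 * (1 - w1 + w3 + w4 + w6))" unfolding y MT_def by (simp add: algebra_simps)
    thus ?thesis unfolding dv4_def by (simp only: prod.case dvd_mult_cancel_left_4b)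
  qed
  have m3: "dv4 (MT 3 y) \<longleftrightarrow> even (-w1 + w3 - w4 + w6) \<and> even (-w2 - w3 + w5 + w6) \<and> even (-w2 + w3 + w5 - w6) \<and> even (-w1 - w2 + w4 - w5) \<and> even (w1 - w2 - w4 - w5) \<and> even (-2 - w1 - w3 - w4 - w6)"
  proof -
    have "MT 3 y = (2 * (-w1 + w3 - w4 + w6), 2 * (-w2 - w3 + w5 + w6), 2 * (-w2 + w3 + w5 - w6), 2 * (-w1 - w2 + w4 - w5), 2 * (w1 - w2 - w4 - w5), 2 * (-2 - w1 - w3 - w4 - w6))" unfolding y MT_def by (simp add: algebra_simps)
    thus ?thesis unfolding dv4_def by (simp only: prod.case dvd_mult_cancel_left_4b)
  qed
  show ?thesis unfolding all4 m0 m1 m2 m3 using e1 e2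
    by (cases "even w1"; cases "even w2"; cases "even w3"; cases "even w4"; cases "even w5"; cases "even w6"; simp_all)
qed

lemma F1_2:
  fixes w1 w2 w3 w4 w5 w6 :: int
  assumes y: "y = ((1 + 2*w1), (1 + 2*w2), (2*w3), (1 + 2*w4), (1 + 2*w5), (2*w6))" and h1: "8 dvd N1 y" and h2: "8 dvd N2 y"
  shows "(dv4 (MT 0 y) \<or> dv4 (MT 1 y) \<or> dv4 (MT 2 y) \<or> dv4 (MT 3 y)) \<and> (\<forall>k<4. \<forall>j<4. dv4 (MT k y) \<longrightarrow> dv4 (MT j y) \<longrightarrow> k = j)"
proof -
  have r1: "N1 y = 4 * (1 + w1 + w2 + w4 + w5 + w1*w1 + w2*w2 + w3*w3 + w4*w4 + w5*w5 + w6*w6)" unfolding y N1_def by (simp add: algebra_simps)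
  have e1: "even (1 + w1 + w2 + w4 + w5 + w1*w1 + w2*w2 + w3*w3 + w4*w4 + w5*w5 + w6*w6)" using h1 unfolding r1 dvd_mult_cancel_left_4 .
  have r2: "N2 y = 4 * (1 + w1 + 2*w2 + w3 + w4 + w6 + 2*w1*w2 + w2*w2 + 2*w3*w4 + w4*w4 + 2*w5*w6 + w6*w6)" unfolding y N2_def by (simp add: algebra_simps)
  have e2: "even (1 + w1 + 2*w2 + w3 + w4 + w6 + 2*w1*w2 + w2*w2 + 2*w3*w4 + w4*w4 + 2*w5*w6 + w6*w6)" using h2 unfolding r2 dvd_mult_cancel_left_4 .
  have m0: "dv4 (MT 0 y) \<longleftrightarrow> even (-w1 - w3 + w4 + w6) \<and> even (-w2 + w3 + w5 + w6) \<and> even (-w2 - w3 + w5 - w6) \<and> even (-2 - w1 - w2 - w4 - w5) \<and> even (-w1 + w2 - w4 + w5) \<and> even (w1 - w3 - w4 + w6)"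
  proof -
    have "MT 0 y = (2 * (-w1 - w3 + w4 + w6), 2 * (-w2 + w3 + w5 + w6), 2 * (-w2 - w3 + w5 - w6), 2 * (-2 - w1 - w2 - w4 - w5), 2 * (-w1 + w2 - w4 + w5), 2 * (w1 - w3 - w4 + w6))" unfolding y MT_def by (simp add: algebra_simps)
    thus ?thesis unfolding dv4_def by (simp only: prod.case dvd_mult_cancel_left_4b)
  qed
  have m1: "dv4 (MT 1 y) \<longleftrightarrow> even (-1 - w1 + w3 - w4 - w6) \<and> even (-1 - w2 - w3 - w5 - w6) \<and> even (-1 - w2 + w3 - w5 + w6) \<and> even (-w1 - w2 + w4 + w5) \<and> even (-w1 + w2 + w4 - w5) \<and> even (1 + w1 + w3 + w4 - w6)"
  proof -
    have "MT 1 y = (2 * (-1 - w1 + w3 - w4 - w6), 2 * (-1 - w2 - w3 - w5 - w6), 2 * (-1 - w2 + w3 - w5 + w6), 2 * (-w1 - w2 + w4 + w5), 2 * (-w1 + w2 + w4 - w5), 2 * (1 + w1 + w3 + w4 - w6))" unfolding y MT_def by (simp add: algebra_simps)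
    thus ?thesis unfolding dv4_def by (simp only: prod.case dvd_mult_cancel_left_4b)
  qed
  have m2: "dv4 (MT 2 y) \<longleftrightarrow> even (-w1 - w3 + w4 - w6) \<and> even (-1 - w2 + w3 - w5 - w6) \<and> even (-1 - w2 - w3 - w5 + w6) \<and> even (-1 - w1 - w2 - w4 + w5) \<and> even (1 + w1 - w2 + w4 + w5) \<and> even (-w1 + w3 + w4 + w6)"
  proof -
    have "MT 2 y = (2 * (-w1 - w3 + w4 - w6), 2 * (-1 - w2 + w3 - w5 - w6), 2 * (-1 - w2 - w3 - w5 + w6), 2 * (-1 - w1 - w2 - w4 + w5), 2 * (1 + w1 - w2 + w4 + w5), 2 * (-w1 + w3 + w4 + w6))" unfolding y MT_def by (simp add: algebra_simps)
    thus ?thesis unfolding dv4_def by (simp only: prod.case dvd_mult_cancel_left_4b)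
  qed
  have m3: "dv4 (MT 3 y) \<longleftrightarrow> even (-1 - w1 + w3 - w4 + w6) \<and> even (-w2 - w3 + w5 + w6) \<and> even (-w2 + w3 + w5 - w6) \<and> even (-1 - w1 - w2 + w4 - w5) \<and> even (-1 + w1 - w2 - w4 - w5) \<and> even (-1 - w1 - w3 - w4 - w6)"
  proof -
    have "MT 3 y = (2 * (-1 - w1 + w3 - w4 + w6), 2 * (-w2 - w3 + w5 + w6), 2 * (-w2 + w3 + w5 - w6), 2 * (-1 - w1 - w2 + w4 - w5), 2 * (-1 + w1 - w2 - w4 - w5), 2 * (-1 - w1 - w3 - w4 - w6))" unfolding y MT_def by (simp add: algebra_simps)
    thus ?thesis unfolding dv4_def by (simp only: prod.case dvd_mult_cancel_left_4b)
  qed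
  show ?thesis unfolding all4 m0 m1 m2 m3 using e1 e2
    by (cases "even w1"; cases "even w2"; cases "even w3"; cases "even w4"; cases "even w5"; cases "even w6"; simp_all)
qed

lemma F1_3:
  fixes w1 w2 w3 w4 w5 w6 :: int
  assumes y: "y = ((2*w1), (1 + 2*w2), (1 + 2*w3), (2*w4), (1 + 2*w5), (1 + 2*w6))" and h1: "8 dvd N1 y" and h2: "8 dvd N2 y"
  shows "(dv4 (MT 0 y) \<or> dv4 (MT 1 y) \<or> dv4 (MT 2 y) \<or> dv4 (MT 3 y)) \<and> (\<forall>k<4. \<forall>j<4. dv4 (MT k y) \<longrightarrow> dv4 (MT j y) \<longrightarrow> k = j)"
proof -
  have r1: "N1 y = 4 * (1 + w2 + w3 + w5 + w6 + w1*w1 + w2*w2 + w3*w3 + w4*w4 + w5*w5 + w6*w6)" unfolding y N1_def by (simp add: algebra_simps)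
  have e1: "even (1 + w2 + w3 + w5 + w6 + w1*w1 + w2*w2 + w3*w3 + w4*w4 + w5*w5 + w6*w6)" using h1 unfolding r1 dvd_mult_cancel_left_4 .
  have r2: "N2 y = 4 * (1 + w1 + w2 + w4 + w5 + 2*w6 + 2*w1*w2 + w2*w2 + 2*w3*w4 + w4*w4 + 2*w5*w6 + w6*w6)" unfolding y N2_def by (simp add: algebra_simps)
  have e2: "even (1 + w1 + w2 + w4 + w5 + 2*w6 + 2*w1*w2 + w2*w2 + 2*w3*w4 + w4*w4 + 2*w5*w6 + w6*w6)" using h2 unfolding r2 dvd_mult_cancel_left_4 .
  have m0: "dv4 (MT 0 y) \<longleftrightarrow> even (-w1 - w3 + w4 + w6) \<and> even (1 - w2 + w3 + w5 + w6) \<and> even (-1 - w2 - w3 + w5 - w6) \<and> even (-1 - w1 - w2 - w4 - w5) \<and> even (1 - w1 + w2 - w4 + w5) \<and> even (w1 - w3 - w4 + w6)"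
  proof -
    have "MT 0 y = (2 * (-w1 - w3 + w4 + w6), 2 * (1 - w2 + w3 + w5 + w6), 2 * (-1 - w2 - w3 + w5 - w6), 2 * (-1 - w1 - w2 - w4 - w5), 2 * (1 - w1 + w2 - w4 + w5), 2 * (w1 - w3 - w4 + w6))" unfolding y MT_def by (simp add: algebra_simps)
    thus ?thesis unfolding dv4_def by (simp only: prod.case dvd_mult_cancel_left_4b)
  qed
  have m1: "dv4 (MT 1 y) \<longleftrightarrow> even (-w1 + w3 - w4 - w6) \<and> even (-2 - w2 - w3 - w5 - w6) \<and> even (-w2 + w3 - w5 + w6) \<and> even (-w1 - w2 + w4 + w5) \<and> even (-w1 + w2 + w4 - w5) \<and> even (w1 + w3 + w4 - w6)"
  proof -
    have "MT 1 y = (2 * (-w1 + w3 - w4 - w6), 2 * (-2 - w2 - w3 - w5 - w6), 2 * (-w2 + w3 - w5 + w6), 2 * (-w1 - w2 + w4 + w5), 2 * (-w1 + w2 + w4 - w5), 2 * (w1 + w3 + w4 - w6))" unfolding y MT_def by (simp add: algebra_simps)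
    thus ?thesis unfolding dv4_def by (simp only: prod.case dvd_mult_cancel_left_4b)
  qed
  have m2: "dv4 (MT 2 y) \<longleftrightarrow> even (-1 - w1 - w3 + w4 - w6) \<and> even (-1 - w2 + w3 - w5 - w6) \<and> even (-1 - w2 - w3 - w5 + w6) \<and> even (-w1 - w2 - w4 + w5) \<and> even (w1 - w2 + w4 + w5) \<and> even (1 - w1 + w3 + w4 + w6)"
  proof -
    have "MT 2 y = (2 * (-1 - w1 - w3 + w4 - w6), 2 * (-1 - w2 + w3 - w5 - w6), 2 * (-1 - w2 - w3 - w5 + w6), 2 * (-w1 - w2 - w4 + w5), 2 * (w1 - w2 + w4 + w5), 2 * (1 - w1 + w3 + w4 + w6))" unfolding y MT_def by (simp add: algebra_simps)
    thus ?thesis unfolding dv4_def by (simp only: prod.case dvd_mult_cancel_left_4b)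
  qed
  have m3: "dv4 (MT 3 y) \<longleftrightarrow> even (1 - w1 + w3 - w4 + w6) \<and> even (-w2 - w3 + w5 + w6) \<and> even (-w2 + w3 + w5 - w6) \<and> even (-1 - w1 - w2 + w4 - w5) \<and> even (-1 + w1 - w2 - w4 - w5) \<and> even (-1 - w1 - w3 - w4 - w6)"
  proof -
    have "MT 3 y = (2 * (1 - w1 + w3 - w4 + w6), 2 * (-w2 - w3 + w5 + w6), 2 * (-w2 + w3 + w5 - w6), 2 * (-1 - w1 - w2 + w4 - w5), 2 * (-1 + w1 - w2 - w4 - w5), 2 * (-1 - w1 - w3 - w4 - w6))" unfolding y MT_def by (simp add: algebra_simps)
    thus ?thesis unfolding dv4_def by (simp only: prod.case dvd_mult_cancel_left_4b)
  qed
  show ?thesis unfolding all4 m0 m1 m2 m3 using e1 e2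
    by (cases "even w1"; cases "even w2"; cases "even w3"; cases "even w4"; cases "even w5"; cases "even w6"; simp_all)
qed




definition sc4 :: "v6 \<Rightarrow> v6" where
  "sc4 z = (case z of (a1,b1,a2,b2,a3,b3) \<Rightarrow> (4*a1,4*b1,4*a2,4*b2,4*a3,4*b3))"
definition div4 :: "v6 \<Rightarrow> v6" where
  "div4 z = (case z of (a1,b1,a2,b2,a3,b3) \<Rightarrow> (a1 div 4,b1 div 4,a2 div 4,b2 div 4,a3 div 4,b3 div 4))"

lemma k4: "k < (4::nat) \<Longrightarrow> k = 0 \<or> k = 1 \<or> k = 2 \<or> k = 3" by auto

lemma MT_M: "k < 4 \<Longrightarrow> MT k (M k z) = sc4 z"
  using k4[of k] by (cases z) (auto simp: M_def MT_def sc4_def algebra_simps)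

lemma M_MT: "k < 4 \<Longrightarrow> M k (MT k z) = sc4 z"
  using k4[of k] by (cases z) (auto simp: M_def MT_def sc4_def algebra_simps)

lemma N1_M: "k < 4 \<Longrightarrow> N1 (M k z) = 4 * N1 z"
  using k4[of k] by (cases z) (auto simp: M_def N1_def algebra_simps)

lemma N2_M: "k < 4 \<Longrightarrow> N2 (M k z) = 4 * N2 z"
  using k4[of k] by (cases z) (auto simp: M_def N2_def algebra_simps)

lemma N1_MT: "k < 4 \<Longrightarrow> N1 (MT k z) = 4 * N1 z"
  using k4[of k] by (cases z) (auto simp: MT_def N1_def algebra_simps)

lemma N2_MT: "k < 4 \<Longrightarrow> N2 (MT k z) = 4 * N2 z"
  using k4[of k] by (cases z) (auto simp: MT_def N2_def algebra_simps)

lemma M_sc4: "M k (sc4 z) = sc4 (M k z)"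
  by (cases z) (auto simp: M_def sc4_def algebra_simps)

lemma N1_sc4: "N1 (sc4 z) = 16 * N1 z"
  by (cases z) (auto simp: sc4_def N1_def algebra_simps)

lemma N2_sc4: "N2 (sc4 z) = 16 * N2 z"
  by (cases z) (auto simp: sc4_def N2_def algebra_simps)

lemma sc4_inj: "sc4 z = sc4 w \<Longrightarrow> z = w"
  by (cases z; cases w) (auto simp: sc4_def)

lemma dv4_div4: "dv4 z \<Longrightarrow> sc4 (div4 z) = z"
  by (cases z) (auto simp: dv4_def sc4_def div4_def)

lemma dv4_sc4: "dv4 (sc4 z)"
  by (cases z) (auto simp: dv4_def sc4_def)

lemma patP_M: "patP z \<Longrightarrow> patP (M k z)"
  by (cases z) (auto simp: patP_def M_def)

definition ind :: "int \<Rightarrow> int" where "ind x = (if even x then 0 else 1)"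

lemma sq_ind: "\<exists>k. x*x = 4*k + ind (x::int)"
proof (cases "even x")
  case True then obtain m where "x = 2*m" by (meson dvdE)
  thus ?thesis using True by (intro exI[of _ "m*m"]) (simp add: ind_def)
next
  case False then obtain m where "x = 2*m+1" by (meson oddE)
  thus ?thesis using False by (intro exI[of _ "m*m+m"]) (simp add: ind_def algebra_simps)
qed

lemma ab_ind: "\<exists>k. 2*a*b = 4*k + 2*(ind a * ind (b::int))"
proof (cases "even a")
  case True then obtain m where "a = 2*m" by (meson dvdE)
  thus ?thesis using True by (intro exI[of _ "m*b"]) (simp add: ind_def)
next
  case F: False
  show ?thesis
  proof (cases "even b")
    case True then obtain m where "b = 2*m" by (meson dvdE)
    thus ?thesis using True by (intro exI[of _ "a*m"]) (simp add: ind_def)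
  next
    case False
    obtain m where m: "a = 2*m+1" using F by (meson oddE)
    obtain l where l: "b = 2*l+1" using False by (meson oddE)
    show ?thesis using F False m l by (intro exI[of _ "2*m*l+m+l"]) (simp add: ind_def algebra_simps)
  qed
qed

lemma dvd4_shift: "(4::int) dvd (4*k + x) \<longleftrightarrow> 4 dvd x"
  by (metis dvd_add_right_iff dvd_triv_left)

lemma N1_ind: "4 dvd N1 (a1,b1,a2,b2,a3,b3) \<Longrightarrow> 4 dvd (ind a1 + ind b1 + ind a2 + ind b2 + ind a3 + ind b3)"
proof -
  assume h: "4 dvd N1 (a1,b1,a2,b2,a3,b3)"
  obtain k1 k2 k3 k4 k5 k6 where "a1*a1 = 4*k1 + ind a1" "b1*b1 = 4*k2 + ind b1" "a2*a2 = 4*k3 + ind a2"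
    "b2*b2 = 4*k4 + ind b2" "a3*a3 = 4*k5 + ind a3" "b3*b3 = 4*k6 + ind b3" using sq_ind by metis
  hence "N1 (a1,b1,a2,b2,a3,b3) = 4*(k1+k2+k3+k4+k5+k6) + (ind a1 + ind b1 + ind a2 + ind b2 + ind a3 + ind b3)"
    by (simp add: N1_def algebra_simps)
  with h show ?thesis by (simp only: dvd4_shift)
qed

lemma N2_ind: "4 dvd N2 (a1,b1,a2,b2,a3,b3) \<Longrightarrow> 4 dvd (2*(ind a1*ind b1) + ind b1 + 2*(ind a2*ind b2) + ind b2 + 2*(ind a3*ind b3) + ind b3)"
proof -
  assume h: "4 dvd N2 (a1,b1,a2,b2,a3,b3)"
  obtain k1 k2 k3 where "b1*b1 = 4*k1 + ind b1" "b2*b2 = 4*k2 + ind b2" "b3*b3 = 4*k3 + ind b3" using sq_ind by metis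
  moreover obtain l1 l2 l3 where "2*a1*b1 = 4*l1 + 2*(ind a1*ind b1)" "2*a2*b2 = 4*l2 + 2*(ind a2*ind b2)"
     "2*a3*b3 = 4*l3 + 2*(ind a3*ind b3)" using ab_ind by metis
  ultimately have "N2 (a1,b1,a2,b2,a3,b3) = 4*(k1+k2+k3+l1+l2+l3) + (2*(ind a1*ind b1) + ind b1 + 2*(ind a2*ind b2) + ind b2 + 2*(ind a3*ind b3) + ind b3)"
    by (simp add: N2_def algebra_simps)
  with h show ?thesis by (simp only: dvd4_shift)
qed

lemma F2: assumes "4 dvd N1 z" "4 dvd N2 z" "patP (M k z)" "k < 4" shows "patP z"
proof -
  obtain a1 b1 a2 b2 a3 b3 where z: "z = (a1,b1,a2,b2,a3,b3)" by (cases z)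
  have h1: "4 dvd (ind a1 + ind b1 + ind a2 + ind b2 + ind a3 + ind b3)" using assms(1) z N1_ind by simp
  have h2: "4 dvd (2*(ind a1*ind b1) + ind b1 + 2*(ind a2*ind b2) + ind b2 + 2*(ind a3*ind b3) + ind b3)"
    using assms(2) z N2_ind by simp
  have h3: "patP (M k (a1,b1,a2,b2,a3,b3))" using assms(3) z by simp
  show ?thesis using h1 h2 h3 k4[OF assms(4)] unfolding z patP_def M_def ind_def
    by (cases "even a1"; cases "even b1"; cases "even a2"; cases "even b2"; cases "even a3"; cases "even b3"; auto)
qed




definition sig :: "v6 \<Rightarrow> v6" where
  "sig z = (case z of (a1,b1,a2,b2,a3,b3) \<Rightarrow> (a1+b1, -b1, a2+b2, -b2, a3+b3, -b3))"

lemma sig_sig: "sig (sig z) = z" by (cases z) (simp add: sig_def)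
lemma N1_sig: "N1 (sig z) = N1 z + N2 z" by (cases z) (simp add: sig_def N1_def N2_def algebra_simps)
lemma N2_sig: "N2 (sig z) = - N2 z" by (cases z) (simp add: sig_def N2_def algebra_simps)
lemma patQ_sig: "patQ (sig z) = patP z" by (cases z) (auto simp: sig_def patP_def patQ_def)

lemma card_A': "card (A' n) = card (A n)"
proof -
  have "A' n = sig ` A n"
  proof (intro equalityI subsetI)
    fix w assume "w \<in> A' n"
    hence "sig w \<in> A n" by (simp add: A_def A'_def N1_sig N2_sig flip: patQ_sig[of "sig w", unfolded sig_sig])
    thus "w \<in> sig ` A n" using sig_sig[of w] by (metis image_eqI)
  next
    fix w assume "w \<in> sig ` A n"
    thus "w \<in> A' n" by (auto simp: A_def A'_def N1_sig N2_sig patQ_sig)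
  qed
  moreover have "inj sig" by (metis injI sig_sig)
  ultimately show ?thesis by (simp add: card_image inj_on_subset)
qed

lemma abs_le_sq: "\<bar>x::int\<bar> \<le> x*x"
proof (cases "x = 0")
  case False
  hence "1 \<le> \<bar>x\<bar>" by simp
  hence "\<bar>x\<bar> * 1 \<le> \<bar>x\<bar> * \<bar>x\<bar>" by (intro mult_left_mono) auto
  thus ?thesis by (simp add: abs_mult_self_eq)
qed simp

lemma finite_A: "finite (A n)"
proof -
  let ?B = "{-(4^n)..(4^n)::int}"
  have "A n \<subseteq> ?B \<times> ?B \<times> ?B \<times> ?B \<times> ?B \<times> ?B"
  proof
    fix z assume "z \<in> A n"
    then obtain a1 b1 a2 b2 a3 b3 where z: "z = (a1,b1,a2,b2,a3,b3)" and
      n: "a1*a1+b1*b1+a2*a2+b2*b2+a3*a3+b3*b3 = 4^n" by (cases z) (auto simp: A_def N1_def)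
    have s: "0 \<le> a1*a1" "0 \<le> b1*b1" "0 \<le> a2*a2" "0 \<le> b2*b2" "0 \<le> a3*a3" "0 \<le> b3*b3" by simp_all
    have "\<bar>a1\<bar> \<le> 4^n" "\<bar>b1\<bar> \<le> 4^n" "\<bar>a2\<bar> \<le> 4^n" "\<bar>b2\<bar> \<le> 4^n" "\<bar>a3\<bar> \<le> 4^n" "\<bar>b3\<bar> \<le> 4^n"
      using abs_le_sq[of a1] abs_le_sq[of b1] abs_le_sq[of a2] abs_le_sq[of b2] abs_le_sq[of a3] abs_le_sq[of b3] n s
      by linarith+
    thus "z \<in> ?B \<times> ?B \<times> ?B \<times> ?B \<times> ?B \<times> ?B" unfolding z by auto
  qed
  thus ?thesis by (rule finite_subset) simp
qed

lemma odd_sq: "odd (x::int) \<Longrightarrow> 1 \<le> x*x"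
  using abs_le_sq[of x] by (cases "x = 0") auto

lemma sq1: "x*x = (1::int) \<Longrightarrow> x = 1 \<or> x = -1"
  using zmult_eq_1_iff[of x x] by auto

lemma sq0: "x*x = (0::int) \<Longrightarrow> x = 0" by simp

lemma A1: "A 1 = {(1,0,1,- 1,0,1), (1,- 1,0,1,1,0), (0,1,1,0,1,- 1), (1,0,1,- 1,0,- 1), (1,- 1,0,1,- 1,0), (0,1,1,0,- 1,1), (1,0,- 1,1,0,1), (1,- 1,0,- 1,1,0), (0,1,- 1,0,1,- 1), (1,0,- 1,1,0,- 1), (1,- 1,0,- 1,- 1,0), (0,1,- 1,0,- 1,1), (- 1,0,1,- 1,0,1), (- 1,1,0,1,1,0), (0,- 1,1,0,1,- 1), (- 1,0,1,- 1,0,- 1), (- 1,1,0,1,- 1,0), (0,- 1,1,0,- 1,1), (- 1,0,- 1,1,0,1), (- 1,1,0,- 1,1,0), (0,- 1,- 1,0,1,- 1), (- 1,0,- 1,1,0,- 1), (- 1,1,0,- 1,- 1,0), (0,- 1,- 1,0,- 1,1)}"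
proof (intro equalityI subsetI)
  fix z assume "z \<in> A 1"
  then obtain a1 b1 a2 b2 a3 b3 where z: "z = (a1,b1,a2,b2,a3,b3)" and
    n1: "a1*a1+b1*b1+a2*a2+b2*b2+a3*a3+b3*b3 = 4" and
    n2: "2*a1*b1+b1*b1+2*a2*b2+b2*b2+2*a3*b3+b3*b3 = 0" and p: "patP (a1,b1,a2,b2,a3,b3)"
    by (cases z) (auto simp: A_def N1_def N2_def)
  have s: "0 \<le> a1*a1" "0 \<le> b1*b1" "0 \<le> a2*a2" "0 \<le> b2*b2" "0 \<le> a3*a3" "0 \<le> b3*b3" by simp_all
  from p consider
    (c1) "odd a1" "even b1" "odd a2" "odd b2" "even a3" "odd b3" |
    (c2) "odd a1" "odd b1" "even a2" "odd b2" "odd a3" "even b3" |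
    (c3) "even a1" "odd b1" "odd a2" "even b2" "odd a3" "odd b3" unfolding patP_def by auto
  thus "z \<in> {(1,0,1,- 1,0,1), (1,- 1,0,1,1,0), (0,1,1,0,1,- 1), (1,0,1,- 1,0,- 1), (1,- 1,0,1,- 1,0), (0,1,1,0,- 1,1), (1,0,- 1,1,0,1), (1,- 1,0,- 1,1,0), (0,1,- 1,0,1,- 1), (1,0,- 1,1,0,- 1), (1,- 1,0,- 1,- 1,0), (0,1,- 1,0,- 1,1), (- 1,0,1,- 1,0,1), (- 1,1,0,1,1,0), (0,- 1,1,0,1,- 1), (- 1,0,1,- 1,0,- 1), (- 1,1,0,1,- 1,0), (0,- 1,1,0,- 1,1), (- 1,0,- 1,1,0,1), (- 1,1,0,- 1,1,0), (0,- 1,- 1,0,1,- 1), (- 1,0,- 1,1,0,- 1), (- 1,1,0,- 1,- 1,0), (0,- 1,- 1,0,- 1,1)}"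
  proof cases
    case c1
    hence "a1*a1 = 1" "a2*a2 = 1" "b2*b2 = 1" "b3*b3 = 1" "b1*b1 = 0" "a3*a3 = 0"
      using odd_sq[of a1] odd_sq[of a2] odd_sq[of b2] odd_sq[of b3] n1 s by linarith+
    hence v: "a1 = 1 \<or> a1 = -1" "a2 = 1 \<or> a2 = -1" "b2 = 1 \<or> b2 = -1" "b3 = 1 \<or> b3 = -1" "b1 = 0" "a3 = 0"
      using sq1 sq0 by blast+
    show ?thesis using v n2 unfolding z by (elim disjE) simp_all
  next
    case c2
    hence "a1*a1 = 1" "b1*b1 = 1" "b2*b2 = 1" "a3*a3 = 1" "a2*a2 = 0" "b3*b3 = 0"
      using odd_sq[of a1] odd_sq[of b1] odd_sq[of b2] odd_sq[of a3] n1 s by linarith+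
    hence v: "a1 = 1 \<or> a1 = -1" "b1 = 1 \<or> b1 = -1" "b2 = 1 \<or> b2 = -1" "a3 = 1 \<or> a3 = -1" "a2 = 0" "b3 = 0"
      using sq1 sq0 by blast+
    show ?thesis using v n2 unfolding z by (elim disjE) simp_all
  next
    case c3
    hence "b1*b1 = 1" "a2*a2 = 1" "a3*a3 = 1" "b3*b3 = 1" "a1*a1 = 0" "b2*b2 = 0"
      using odd_sq[of b1] odd_sq[of a2] odd_sq[of a3] odd_sq[of b3] n1 s by linarith+
    hence v: "b1 = 1 \<or> b1 = -1" "a2 = 1 \<or> a2 = -1" "a3 = 1 \<or> a3 = -1" "b3 = 1 \<or> b3 = -1" "a1 = 0" "b2 = 0"
      using sq1 sq0 by blast+
    show ?thesis using v n2 unfolding z by (elim disjE) simp_all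
  qed
next
  fix z :: v6 assume "z \<in> {(1,0,1,- 1,0,1), (1,- 1,0,1,1,0), (0,1,1,0,1,- 1), (1,0,1,- 1,0,- 1), (1,- 1,0,1,- 1,0), (0,1,1,0,- 1,1), (1,0,- 1,1,0,1), (1,- 1,0,- 1,1,0), (0,1,- 1,0,1,- 1), (1,0,- 1,1,0,- 1), (1,- 1,0,- 1,- 1,0), (0,1,- 1,0,- 1,1), (- 1,0,1,- 1,0,1), (- 1,1,0,1,1,0), (0,- 1,1,0,1,- 1), (- 1,0,1,- 1,0,- 1), (- 1,1,0,1,- 1,0), (0,- 1,1,0,- 1,1), (- 1,0,- 1,1,0,1), (- 1,1,0,- 1,1,0), (0,- 1,- 1,0,1,- 1), (- 1,0,- 1,1,0,- 1), (- 1,1,0,- 1,- 1,0), (0,- 1,- 1,0,- 1,1)}"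
  thus "z \<in> A 1" by (elim insertE emptyE) (simp_all add: A_def N1_def N2_def patP_def)
qed

lemma card_A1: "card (A 1) = 24"
  unfolding A1 by simp




lemma ex4: "(\<exists>k<(4::nat). P k) = (P 0 \<or> P 1 \<or> P 2 \<or> P 3)"
proof
  assume "\<exists>k<4. P k"
  then obtain k where "k < 4" "P k" by blast
  thus "P 0 \<or> P 1 \<or> P 2 \<or> P 3" using k4[of k] by auto
next
  assume h: "P 0 \<or> P 1 \<or> P 2 \<or> P 3"
  have "(0::nat) < 4" "(1::nat) < 4" "(2::nat) < 4" "(3::nat) < 4" by simp_all
  with h show "\<exists>k<4. P k" by blast
qed

lemma F1:
  assumes p: "patP y" and h1: "8 dvd N1 y" and h2: "8 dvd N2 y"
  shows "(\<exists>k<4. dv4 (MT k y)) \<and> (\<forall>k<4. \<forall>j<4. dv4 (MT k y) \<longrightarrow> dv4 (MT j y) \<longrightarrow> k = j)"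
proof -
  obtain a1 b1 a2 b2 a3 b3 where y: "y = (a1,b1,a2,b2,a3,b3)" by (cases y)
  have pp: "patP (a1,b1,a2,b2,a3,b3)" using p y by simp
  have "(dv4 (MT 0 y) \<or> dv4 (MT 1 y) \<or> dv4 (MT 2 y) \<or> dv4 (MT 3 y)) \<and> (\<forall>k<4. \<forall>j<4. dv4 (MT k y) \<longrightarrow> dv4 (MT j y) \<longrightarrow> k = j)"
    using pp unfolding patP_def prod.case
  proof (elim disjE conjE)
    assume "odd a1" "even b1" "odd a2" "odd b2" "even a3" "odd b3"
    obtain w1 where o1: "a1 = 2*w1+1" using \<open>odd a1\<close> by (blast elim: oddE)
    obtain w2 where o2: "b1 = 2*w2" using \<open>even b1\<close> by (blast elim: evenE)
    obtain w3 where o3: "a2 = 2*w3+1" using \<open>odd a2\<close> by (blast elim: oddE)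
    obtain w4 where o4: "b2 = 2*w4+1" using \<open>odd b2\<close> by (blast elim: oddE)
    obtain w5 where o5: "a3 = 2*w5" using \<open>even a3\<close> by (blast elim: evenE)
    obtain w6 where o6: "b3 = 2*w6+1" using \<open>odd b3\<close> by (blast elim: oddE)
    have "y = ((1 + 2*w1), (2*w2), (1 + 2*w3), (1 + 2*w4), (2*w5), (1 + 2*w6))" using y o1 o2 o3 o4 o5 o6 by simp
    from F1_1[OF this h1 h2] show ?thesis .
  next
    assume "odd a1" "odd b1" "even a2" "odd b2" "odd a3" "even b3"
    obtain w1 where o1: "a1 = 2*w1+1" using \<open>odd a1\<close> by (blast elim: oddE)
    obtain w2 where o2: "b1 = 2*w2+1" using \<open>odd b1\<close> by (blast elim: oddE)
    obtain w3 where o3: "a2 = 2*w3" using \<open>even a2\<close> by (blast elim: evenE)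
    obtain w4 where o4: "b2 = 2*w4+1" using \<open>odd b2\<close> by (blast elim: oddE)
    obtain w5 where o5: "a3 = 2*w5+1" using \<open>odd a3\<close> by (blast elim: oddE)
    obtain w6 where o6: "b3 = 2*w6" using \<open>even b3\<close> by (blast elim: evenE)
    have "y = ((1 + 2*w1), (1 + 2*w2), (2*w3), (1 + 2*w4), (1 + 2*w5), (2*w6))" using y o1 o2 o3 o4 o5 o6 by simp
    from F1_2[OF this h1 h2] show ?thesis .
  next
    assume "even a1" "odd b1" "odd a2" "even b2" "odd a3" "odd b3"
    obtain w1 where o1: "a1 = 2*w1" using \<open>even a1\<close> by (blast elim: evenE)
    obtain w2 where o2: "b1 = 2*w2+1" using \<open>odd b1\<close> by (blast elim: oddE)
    obtain w3 where o3: "a2 = 2*w3+1" using \<open>odd a2\<close> by (blast elim: oddE)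
    obtain w4 where o4: "b2 = 2*w4" using \<open>even b2\<close> by (blast elim: evenE)
    obtain w5 where o5: "a3 = 2*w5+1" using \<open>odd a3\<close> by (blast elim: oddE)
    obtain w6 where o6: "b3 = 2*w6+1" using \<open>odd b3\<close> by (blast elim: oddE)
    have "y = ((2*w1), (1 + 2*w2), (1 + 2*w3), (2*w4), (1 + 2*w5), (1 + 2*w6))" using y o1 o2 o3 o4 o5 o6 by simp
    from F1_3[OF this h1 h2] show ?thesis .
  qed
  thus ?thesis unfolding ex4 by blast
qed

lemma pow4_dvd: "n \<ge> 1 \<Longrightarrow> (4::int) dvd 4^n"
  by (simp add: dvd_power)

lemma pow4_dvd16: "n \<ge> 1 \<Longrightarrow> (16::int) dvd 4^Suc n"
proof -
  assume "n \<ge> 1"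
  then obtain m where "n = Suc m" by (cases n) auto
  thus ?thesis by simp
qed

lemma dvd8: "n \<ge> 1 \<Longrightarrow> x = 4^Suc n \<Longrightarrow> (8::int) dvd x"
proof -
  assume "n \<ge> 1" "x = 4^Suc n"
  then obtain m where "x = 4^Suc (Suc m)" by (cases n) auto
  hence "x = 8 * (2 * 4^m)" by simp
  thus ?thesis by simp
qed

lemma step_card:
  assumes n: "n \<ge> 1"
  shows "card (A (Suc n)) = 4 * card (A n)"
proof -
  have eq: "A (Suc n) = (\<Union>k\<in>{..<4}. M k ` A n)"
  proof (intro equalityI subsetI)
    fix y assume "y \<in> A (Suc n)"
    hence y: "N1 y = 4^Suc n" "N2 y = 0" "patP y" by (auto simp: A_def)
    have "8 dvd N1 y" using dvd8[OF n y(1)] .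
    moreover have "8 dvd N2 y" using y(2) by simp
    ultimately obtain k where k: "k < 4" "dv4 (MT k y)" using F1[OF y(3)] by blast
    define z where "z = div4 (MT k y)"
    have sz: "sc4 z = MT k y" unfolding z_def using dv4_div4[OF k(2)] .
    have "sc4 (M k z) = sc4 y" unfolding M_sc4[symmetric] sz M_MT[OF k(1)] ..
    hence Mz: "M k z = y" by (rule sc4_inj)
    have "16 * N1 z = 16 * 4^n" using N1_sc4[of z] unfolding sz N1_MT[OF k(1)] y(1) by simp
    hence n1: "N1 z = 4^n" by simp
    have "16 * N2 z = 0" using N2_sc4[of z] unfolding sz N2_MT[OF k(1)] y(2) by simp
    hence n2: "N2 z = 0" by simp
    have "patP z" using F2[of z k] n1 n2 pow4_dvd[OF n] Mz y(3) k(1) by simp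
    hence "z \<in> A n" using n1 n2 by (simp add: A_def)
    thus "y \<in> (\<Union>k\<in>{..<4}. M k ` A n)" using Mz k(1) by blast
  next
    fix y assume "y \<in> (\<Union>k\<in>{..<4}. M k ` A n)"
    then obtain k z where k: "k < 4" and z: "z \<in> A n" and yz: "y = M k z" by blast
    thus "y \<in> A (Suc n)" by (auto simp: A_def N1_M N2_M patP_M)
  qed
  have disj: "\<forall>i\<in>{..<4}. \<forall>j\<in>{..<4}. i \<noteq> j \<longrightarrow> M i ` A n \<inter> M j ` A n = {}"
  proof (intro ballI impI)
    fix i j :: nat assume i: "i \<in> {..<4}" and j: "j \<in> {..<4}" and ij: "i \<noteq> j"
    show "M i ` A n \<inter> M j ` A n = {}"
    proof (rule ccontr)
      assume "M i ` A n \<inter> M j ` A n \<noteq> {}"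
      then obtain y z z' where z: "z \<in> A n" "y = M i z" and z': "z' \<in> A n" "y = M j z'" by blast
      have "y \<in> A (Suc n)" using eq z i by blast
      hence y: "N1 y = 4^Suc n" "N2 y = 0" "patP y" by (auto simp: A_def)
      have "8 dvd N1 y" using dvd8[OF n y(1)] .
      moreover have "8 dvd N2 y" using y(2) by simp
      ultimately have u: "\<forall>k<4. \<forall>j<4. dv4 (MT k y) \<longrightarrow> dv4 (MT j y) \<longrightarrow> k = j" using F1[OF y(3)] by blast
      have "dv4 (MT i y)" using z(2) MT_M[of i z] i dv4_sc4 by simp
      moreover have "dv4 (MT j y)" using z'(2) MT_M[of j z'] j dv4_sc4 by simp
      ultimately show False using u i j ij by auto
    qed
  qed
  have inj: "inj_on (M k) (A n)" if "k < 4" for k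
  proof
    fix z z' assume "z \<in> A n" "z' \<in> A n" "M k z = M k z'"
    hence "sc4 z = sc4 z'" using MT_M[OF that] by metis
    thus "z = z'" by (rule sc4_inj)
  qed
  have "card (A (Suc n)) = (\<Sum>k\<in>{..<4}. card (M k ` A n))"
    unfolding eq by (rule card_UN_disjoint) (auto simp: finite_A disj)
  also have "\<dots> = (\<Sum>k\<in>{..<4::nat}. card (A n))"
    by (rule sum.cong) (auto simp: card_image inj)
  finally show ?thesis by simp
qed

lemma card_A: "n \<ge> 1 \<Longrightarrow> card (A n) = 6 * 4^n"
proof (induction n rule: dec_induct)
  case base thus ?case using card_A1 by simp
next
  case (step m) thus ?case using step_card[of m] by simp
qed

theorem mainTheorem9:
  fixes n :: nat
  assumes "n \<ge> 1"
  shows "card (S3 n) = 3 * 2 ^ (2 * n + 1) \<and> card (S3' n) = 3 * 2 ^ (2 * n + 1)"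
proof -
  have "(3::nat) * 2 ^ (2 * n + 1) = 6 * 4^n" by (simp add: power_mult power_add)
  thus ?thesis using card_S3 card_S3' card_A' card_A[OF assms] by simp
qed


end
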